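(* Let $1<n\leq m$ and let $v\in Z_{n,m}$ with $h(v)<h_{n,m}$. Then $d(v,0)\leq d(u^{(0)},0)\leq D_{n,m}$.
   Context: Elements of $\mathbb{Z}_n$ are identified with representatives in $\{0,\dots,n-1\}$ (so $v_0,v_{m+1}$ are such integers in sums). $Z_{n,m}$ has vertices $u=(u_0,\dots,u_{m+1})\in\mathbb{Z}_n\times\{-1,0,1\}^m\times\mathbb{Z}_n$ with $\sum u_i\equiv0\pmod n$; $u,v$ adjacent if there is $0\leq i\leq m$ with $u_j=v_j$ for $j\notin\{i,i+1\}$ and either ($u_i=v_i+1$, $u_{i+1}=v_{i+1}-1$) or ($u_i=v_i-1$, $u_{i+1}=v_{i+1}+1$), arithmetic in coordinates $0,m+1$ in $\mathbb{Z}_n$. $d$ is graph distance, $0$ the all-zero vertex. $\operatorname{Piv}(v)$ is the set of integers $-1\le p\le m+1$ with $n\mid\sum_{i=0}^pv_i$ (empty sum $0$). $h(v)=\min\{|p-\frac m2|:p\in\operatorname{Piv}(v)\}$. $h_{n,m}=\frac n2$ if $2\mid(m-n)$ and $\frac{n+1}{2}$ otherwise. $u^{(0)}$ is the vertex with $u_i=1$ ($1\le i\le m$), $u_0\equiv-\lfloor\frac{m-n}2\rfloor\pmod n$; for $n<m$, $m-n$ odd, $u^{(1)}$ is the vertex with $u_{\lceil(m+1)/2\rceil}=0$, other $u_i=1$ ($1\le i\le m$), $u_0\equiv-\lfloor\frac{m-n}2\rfloor\pmod n$. $D_{n,m}=d(u^{(0)},0)$ if $2\mid(m-n)$ and $D_{n,m}=\max\{d(u^{(0)},0),d(u^{(1)},0)\}$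 otherwise. *)

theory Defs
  imports Complex_Main "HOL-Library.Extended_Nat"
begin

text \<open>Vertices of Z_{n,m}: functions u :: nat => int, coordinates 0..m+1,
  with u_0, u_{m+1} in {0..n-1} (representatives of Z_n), u_i in {-1,0,1}
  for 1 <= i <= m, u_i = 0 beyond m+1 (canonical), and the sum divisible by n.\<close>
definition Zvert :: "nat \<Rightarrow> nat \<Rightarrow> (nat \<Rightarrow> int) \<Rightarrow> bool" where
  "Zvert n m u \<longleftrightarrow>
     u 0 \<in> {0..<int n} \<and> u (m+1) \<in> {0..<int n} \<and>
     (\<forall>i\<in>{1..m}. u i \<in> {-1,0,1}) \<and> (\<forall>i>m+1. u i = 0) \<and>
     int n dvd (\<Sum>i\<le>m+1. u i)"

definition coord_eq :: "nat \<Rightarrow> nat \<Rightarrow> nat \<Rightarrow> int \<Rightarrow> int \<Rightarrow> bool" where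
  "coord_eq n m k a b \<longleftrightarrow> (if k = 0 \<or> k = m+1 then a mod int n = b mod int n else a = b)"

definition Zadj :: "nat \<Rightarrow> nat \<Rightarrow> (nat \<Rightarrow> int) \<Rightarrow> (nat \<Rightarrow> int) \<Rightarrow> bool" where
  "Zadj n m u v \<longleftrightarrow> Zvert n m u \<and> Zvert n m v \<and>
     (\<exists>i\<le>m. (\<forall>j. j \<noteq> i \<and> j \<noteq> i+1 \<longrightarrow> u j = v j) \<and>
        ((coord_eq n m i (u i) (v i + 1) \<and> coord_eq n m (i+1) (u (i+1)) (v (i+1) - 1)) \<or>
         (coord_eq n m i (u i) (v i - 1) \<and> coord_eq n m (i+1) (u (i+1)) (v (i+1) + 1))))"

definition Zdist :: "nat \<Rightarrow> nat \<Rightarrow> (nat \<Rightarrow> int) \<Rightarrow> (nat \<Rightarrow> int) \<Rightarrow> enat" where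
  "Zdist n m u v = (INF k \<in> {k. (Zadj n m ^^ k) u v}. enat k)"

definition Piv :: "nat \<Rightarrow> nat \<Rightarrow> (nat \<Rightarrow> int) \<Rightarrow> int set" where
  "Piv n m v = {p. -1 \<le> p \<and> p \<le> int m + 1 \<and> int n dvd (\<Sum>i\<in>{0..p}. v (nat i))}"

definition hval :: "nat \<Rightarrow> nat \<Rightarrow> (nat \<Rightarrow> int) \<Rightarrow> real" where
  "hval n m v = Min ((\<lambda>p. \<bar>real_of_int p - real m / 2\<bar>) ` Piv n m v)"

definition hnm :: "nat \<Rightarrow> nat \<Rightarrow> real" where
  "hnm n m = (if even (int m - int n) then real n / 2 else (real n + 1) / 2)"

text \<open>u^(0): u_i = 1 (1<=i<=m), u_0 = -floor((m-n)/2) mod n, u_{m+1} forced by the sum condition.\<close>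
definition u0vert :: "nat \<Rightarrow> nat \<Rightarrow> nat \<Rightarrow> int" where
  "u0vert n m i = (let a = (- \<lfloor>(real m - real n) / 2\<rfloor>) mod int n in
     if i = 0 then a
     else if i \<le> m then 1
     else if i = m + 1 then (- (a + int m)) mod int n
     else 0)"

definition u1vert :: "nat \<Rightarrow> nat \<Rightarrow> nat \<Rightarrow> int" where
  "u1vert n m i = (let a = (- \<lfloor>(real m - real n) / 2\<rfloor>) mod int n in
     if i = 0 then a
     else if i = nat \<lceil>(real m + 1) / 2\<rceil> then 0
     else if i \<le> m then 1
     else if i = m + 1 then (- (a + int m - 1)) mod int n
     else 0)"

definition Dnm :: "nat \<Rightarrow> nat \<Rightarrow> enat" where
  "Dnm n m = (if even (int m - int n) then Zdist n m (u0vert n m) (\<lambda>_. 0)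
              else max (Zdist n m (u0vert n m) (\<lambda>_. 0)) (Zdist n m (u1vert n m) (\<lambda>_. 0)))"

end

theory Submission
  imports Defs
begin


definition Sp :: "(nat \<Rightarrow> int) \<Rightarrow> nat \<Rightarrow> int" where
  "Sp v q = (\<Sum>i\<le>q. v i)"

definition Ph :: "nat \<Rightarrow> nat \<Rightarrow> (nat \<Rightarrow> int) \<Rightarrow> int \<Rightarrow> int" where
  "Ph n m v k = (\<Sum>q\<le>m. \<bar>Sp v q - k * int n\<bar>)"

lemma Sp_Suc: "Sp v (Suc q) = Sp v q + v (Suc q)"
  by (simp add: Sp_def)

lemma Sp_0: "Sp v 0 = v 0"
  by (simp add: Sp_def)

lemma two_point:
  assumes "\<forall>x. u x = y x + (if x = i then a else 0) + (if x = Suc i then b else 0)"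
  shows "Sp u q = Sp y q + (if i \<le> q then a else 0) + (if Suc i \<le> q then b else 0)"
proof -
  have "Sp u q = (\<Sum>x\<le>q. y x) + (\<Sum>x\<le>q. if x = i then a else 0) + (\<Sum>x\<le>q. if x = Suc i then b else 0)"
    unfolding Sp_def using assms by (simp add: sum.distrib)
  then show ?thesis by (simp add: Sp_def sum.delta)
qed

lemma mod_int_ex: "\<exists>j. (x::int) mod int n = x + j * int n"
  by (intro exI[of _ "- (x div int n)"]) (simp add: minus_div_mult_eq_mod[symmetric])

lemma edge:
  assumes adj: "Zadj n m u y" and m1: "m \<ge> 1"
  shows "\<exists>i j e. \<bar>e\<bar> \<le> 1 \<and> (\<forall>q\<le>m. Sp u q = Sp y q + (if q = i then e else 0) + j * int n)"
proof -
  obtain i where im: "i \<le> m" and eqo: "\<forall>j. j \<noteq> i \<and> j \<noteq> i+1 \<longrightarrow> u j = y j"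
    and dis: "(coord_eq n m i (u i) (y i + 1) \<and> coord_eq n m (i+1) (u (i+1)) (y (i+1) - 1)) \<or>
         (coord_eq n m i (u i) (y i - 1) \<and> coord_eq n m (i+1) (u (i+1)) (y (i+1) + 1))"
    using adj unfolding Zadj_def by blast
  obtain s :: int where s: "s = 1 \<or> s = -1" and c1: "coord_eq n m i (u i) (y i + s)"
    and c2: "coord_eq n m (i+1) (u (i+1)) (y (i+1) - s)"
    using dis by (metis diff_minus_eq_add uminus_add_conv_diff add_uminus_conv_diff)
  define a where "a = u i - y i"
  define b where "b = u (Suc i) - y (Suc i)"
  have uf: "\<forall>x. u x = y x + (if x = i then a else 0) + (if x = Suc i then b else 0)"
    using eqo a_def b_def by auto
  have sp: "\<And>q. Sp u q = Sp y q + (if i \<le> q then a else 0) + (if Suc i \<le> q then b else 0)"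
    using two_point[OF uf] by blast
  show ?thesis
  proof (cases "i = 0")
    case True
    have "u 0 mod int n = (y 0 + s) mod int n" using c1 True by (simp add: coord_eq_def)
    then have "int n dvd u 0 - (y 0 + s)" by (simp only: mod_eq_dvd_iff)
    moreover have "u 0 - (y 0 + s) = a - s" using True a_def by simp
    ultimately have "int n dvd a - s" by simp
    then obtain j where j: "a = s + j * int n" by (metis dvd_def mult.commute diff_eq_eq add.commute)
    have "b = - s" using c2 True m1 b_def by (simp add: coord_eq_def)
    then have "\<forall>q\<le>m. Sp u q = Sp y q + (if q = i then s else 0) + j * int n"
      using sp True j by auto
    then show ?thesis using s by (intro exI[of _ i] exI[of _ j] exI[of _ s]) auto
  next
    case False
    have "a = s" using c1 False im a_def by (simp add: coord_eq_def)
    moreover have "Suc i \<le> m \<Longrightarrow> b = - s" using c2 b_def by (simp add: coord_eq_def)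
    ultimately have "\<forall>q\<le>m. Sp u q = Sp y q + (if q = i then s else 0) + 0 * int n"
      using sp by auto
    then show ?thesis using s by (intro exI[of _ i] exI[of _ 0] exI[of _ s]) auto
  qed
qed

lemma Ph_shift:
  assumes "\<forall>q\<le>m. Sp u q = Sp y q + (if q = i then e else 0) + j * int n"
  shows "Ph n m u (k + j) = (\<Sum>q\<le>m. \<bar>Sp y q - k * int n + (if q = i then e else 0)\<bar>)"
  unfolding Ph_def
  by (rule sum.cong) (auto simp: assms algebra_simps)

lemma edge_Ph:
  assumes adj: "Zadj n m u y" and m1: "m \<ge> 1"
  shows "\<exists>k'. Ph n m u k' \<le> Ph n m y k + 1"
proof -
  obtain i j e where e: "\<bar>e\<bar> \<le> 1" and h: "\<forall>q\<le>m. Sp u q = Sp y q + (if q = i then e else 0) + j * int n"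
    using edge[OF adj m1] by blast
  have "Ph n m u (k + j) = (\<Sum>q\<le>m. \<bar>Sp y q - k * int n + (if q = i then e else 0)\<bar>)"
    by (rule Ph_shift[OF h])
  also have "\<dots> \<le> (\<Sum>q\<le>m. \<bar>Sp y q - k * int n\<bar> + (if q = i then \<bar>e\<bar> else 0))"
    by (rule sum_mono) auto
  also have "\<dots> = Ph n m y k + (\<Sum>q\<le>m. if q = i then \<bar>e\<bar> else 0)"
    by (simp add: Ph_def sum.distrib)
  also have "\<dots> \<le> Ph n m y k + 1" using e by (simp add: sum.delta)
  finally show ?thesis by blast
qed

lemma lower:
  assumes "(Zadj n m ^^ j) u (\<lambda>_. 0)" and m1: "m \<ge> 1"
  shows "\<exists>k. Ph n m u k \<le> int j"
  using assms(1)
proof (induction j arbitrary: u)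
  case 0
  then have "u = (\<lambda>_. 0)" by simp
  then have "Ph n m u 0 = 0" by (simp add: Ph_def Sp_def)
  then show ?case by (intro exI[of _ 0]) simp
next
  case (Suc j)
  from Suc.prems obtain y where a: "Zadj n m u y" and b: "(Zadj n m ^^ j) y (\<lambda>_. 0)"
    by (blast elim: relpowp_Suc_E2)
  obtain k where "Ph n m y k \<le> int j" using Suc.IH[OF b] by blast
  moreover obtain k' where "Ph n m u k' \<le> Ph n m y k + 1" using edge_Ph[OF a m1] by blast
  ultimately show ?case by (intro exI[of _ k']) simp
qed


lemma move:
  assumes zv: "Zvert n m v" and n1: "n > 1" and m1: "m \<ge> 1" and pm: "p \<le> m"
    and s: "s = 1 \<or> s = -1"
    and c1: "1 \<le> p \<Longrightarrow> v p - s \<in> {-1,0,1}"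
    and c2: "Suc p \<le> m \<Longrightarrow> v (Suc p) + s \<in> {-1,0,1}"
  shows "\<exists>w j. Zadj n m v w \<and> (\<forall>q\<le>m. Sp w q = Sp v q + (if q = p then -s else 0) + j * int n)"
proof -
  define w where "w = (\<lambda>x. if x = p then (if p = 0 then (v 0 - s) mod int n else v p - s)
      else if x = Suc p then (if p = m then (v (m+1) + s) mod int n else v (Suc p) + s) else v x)"
  define a where "a = w p - v p"
  define b where "b = w (Suc p) - v (Suc p)"
  have wf: "\<forall>x. w x = v x + (if x = p then a else 0) + (if x = Suc p then b else 0)"
    using a_def b_def w_def by auto
  have sp: "\<And>q. Sp w q = Sp v q + (if p \<le> q then a else 0) + (if Suc p \<le> q then b else 0)"
    using two_point[OF wf] by blast
  obtain j1 where j1: "(v 0 - s) mod int n = (v 0 - s) + j1 * int n" using mod_int_ex by blast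
  obtain j2 where j2: "(v (m+1) + s) mod int n = (v (m+1) + s) + j2 * int n" using mod_int_ex by blast
  define j where "j = (if p = 0 then j1 else 0)"
  have a_eq: "a = -s + j * int n" using j1 unfolding a_def w_def j_def by auto
  have b_eq: "p < m \<Longrightarrow> b = s" unfolding b_def w_def by auto
  have b_eq2: "p = m \<Longrightarrow> b = s + j2 * int n" using j2 pm m1 unfolding b_def w_def by auto
  have npos: "int n > 0" using n1 by simp
  have zw: "Zvert n m w"
  proof -
    have f1: "w 0 \<in> {0..<int n}"
    proof (cases "p = 0")
      case True then show ?thesis using npos by (simp add: w_def)
    next
      case False then show ?thesis using zv by (simp add: w_def Zvert_def)
    qed
    have f2: "w (m+1) \<in> {0..<int n}"
    proof (cases "p = m")
      case True then show ?thesis using npos by (simp add: w_def)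
    next
      case False then show ?thesis using zv pm by (simp add: w_def Zvert_def)
    qed
    have f3: "\<forall>i\<in>{1..m}. w i \<in> {-1,0,1}"
    proof
      fix i assume i: "i \<in> {1..m}"
      show "w i \<in> {-1,0,1}"
      proof (cases "i = p")
        case True then show ?thesis using c1 i by (simp add: w_def)
      next
        case False
        show ?thesis
        proof (cases "i = Suc p")
          case True then show ?thesis using c2 i False by (auto simp: w_def)
        next
          case F2: False then show ?thesis using zv i False by (simp add: w_def Zvert_def)
        qed
      qed
    qed
    have f4: "\<forall>i>m+1. w i = 0" using zv pm by (simp add: w_def Zvert_def)
    have f5: "int n dvd (\<Sum>i\<le>m+1. w i)"
    proof -
      have "(\<Sum>i\<le>m+1. w i) = Sp w (m+1)" by (simp add: Sp_def)
      also have "\<dots> = Sp v (m+1) + a + b" using sp pm by simp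
      finally have e: "(\<Sum>i\<le>m+1. w i) = (\<Sum>i\<le>m+1. v i) + a + b" by (simp add: Sp_def)
      have "int n dvd a + b"
      proof (cases "p = m")
        case True
        then have "a + b = (j + j2) * int n" using a_eq b_eq2 by (simp add: algebra_simps)
        then show ?thesis by simp
      next
        case False then show ?thesis using a_eq b_eq pm by (simp add: algebra_simps)
      qed
      moreover have "int n dvd (\<Sum>i\<le>m+1. v i)" using zv by (simp add: Zvert_def)
      ultimately show ?thesis using e by (metis add.assoc dvd_add)
    qed
    show ?thesis unfolding Zvert_def by (intro conjI f1 f2 f3 f4 f5)
  qed
  have ce1: "coord_eq n m p (v p) (w p + s)"
  proof (cases "p = 0")
    case True then show ?thesis by (simp add: coord_eq_def w_def mod_add_left_eq)
  next
    case False then show ?thesis using pm by (simp add: coord_eq_def w_def)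
  qed
  have ce2: "coord_eq n m (p+1) (v (p+1)) (w (p+1) - s)"
  proof (cases "p = m")
    case True then show ?thesis by (simp add: coord_eq_def w_def mod_diff_left_eq)
  next
    case False then show ?thesis by (simp add: coord_eq_def w_def)
  qed
  have adj: "Zadj n m v w"
    unfolding Zadj_def
  proof (intro conjI zv zw exI[of _ p])
    show "p \<le> m" by (rule pm)
    show "\<forall>ja. ja \<noteq> p \<and> ja \<noteq> p + 1 \<longrightarrow> v ja = w ja" by (simp add: w_def)
    show "coord_eq n m p (v p) (w p + 1) \<and> coord_eq n m (p + 1) (v (p + 1)) (w (p + 1) - 1) \<or>
      coord_eq n m p (v p) (w p - 1) \<and> coord_eq n m (p + 1) (v (p + 1)) (w (p + 1) + 1)"
      using s ce1 ce2 by auto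
  qed
  have "\<forall>q\<le>m. Sp w q = Sp v q + (if q = p then -s else 0) + j * int n"
  proof (intro allI impI)
    fix q assume q: "q \<le> m"
    show "Sp w q = Sp v q + (if q = p then -s else 0) + j * int n"
    proof (cases "p = 0")
      case True
      then have "Suc p \<le> q \<Longrightarrow> b = s" using b_eq m1 by auto
      then show ?thesis using sp[of q] a_eq True by auto
    next
      case False
      then have "j = 0" by (simp add: j_def)
      moreover have "Suc p \<le> q \<Longrightarrow> b = s" using b_eq q by auto
      ultimately show ?thesis using sp[of q] a_eq by auto
    qed
  qed
  then show ?thesis using adj by (intro exI[of _ w] exI[of _ j] conjI)
qed


lemma upper:
  assumes "Zvert n m v" and n1: "n > 1" and m1: "m \<ge> 1"
  shows "\<exists>j. int j \<le> Ph n m v k \<and> (Zadj n m ^^ j) v (\<lambda>_. 0)"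
  using assms(1)
proof (induction "nat (Ph n m v k)" arbitrary: v k rule: less_induct)
  case less
  define T where "T q = Sp v q - k * int n" for q
  have Ph_T: "Ph n m v k = (\<Sum>q\<le>m. \<bar>T q\<bar>)" by (simp add: Ph_def T_def)
  have vS: "\<And>q. v (Suc q) = T (Suc q) - T q" by (simp add: T_def Sp_Suc)
  have zv: "Zvert n m v" by (rule less.prems)
  have npos: "int n > 0" using n1 by simp
  show ?case
  proof (cases "Ph n m v k = 0")
    case True
    then have "(\<Sum>q\<le>m. \<bar>T q\<bar>) = 0" using Ph_T by simp
    then have allz: "\<forall>q\<in>{..m}. \<bar>T q\<bar> = 0" by (subst sum_nonneg_eq_0_iff[symmetric]) auto
    then have Tz: "\<And>q. q \<le> m \<Longrightarrow> T q = 0" by auto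
    have v0: "v 0 = k * int n" using Tz[of 0] by (simp add: T_def Sp_0)
    have v0r: "0 \<le> v 0" "v 0 < int n" using zv by (auto simp: Zvert_def)
    have "k \<ge> 0" using v0 v0r npos by (simp add: zero_le_mult_iff)
    moreover have "k * int n < 1 * int n" using v0 v0r by simp
    then have "k < 1" using mult_right_less_imp_less[of k "int n" 1] by simp
    ultimately have k0: "k = 0" by simp
    have Sz: "\<And>q. q \<le> m \<Longrightarrow> Sp v q = 0" using Tz k0 by (simp add: T_def)
    have vmid: "\<And>i. 1 \<le> i \<Longrightarrow> i \<le> m \<Longrightarrow> v i = 0"
    proof -
      fix i assume "1 \<le> i" "i \<le> m"
      then obtain q where q: "i = Suc q" by (cases i) auto
      show "v i = 0" using Sz[of q] Sz[of "Suc q"] q \<open>i \<le> m\<close> Sp_Suc[of v q] by simp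
    qed
    have vlast: "v (m+1) = 0"
    proof -
      have "(\<Sum>i\<le>m+1. v i) = Sp v (m+1)" by (simp add: Sp_def)
      also have "\<dots> = v (m+1)" using Sp_Suc[of v m] Sz[of m] by simp
      finally have "int n dvd v (m+1)" using zv by (simp add: Zvert_def)
      moreover have "0 \<le> v (m+1)" "v (m+1) < int n" using zv by (auto simp: Zvert_def)
      ultimately show ?thesis using zdvd_not_zless[of "v (m+1)" "int n"] by force
    qed
    have "v = (\<lambda>_. 0)"
    proof
      fix x show "v x = 0"
      proof (cases "x = 0")
        case True then show ?thesis using v0 k0 by simp
      next
        case False
        show ?thesis
        proof (cases "x \<le> m")
          case True then show ?thesis using vmid False by simp
        next
          case F2: False
          show ?thesis
          proof (cases "x = m+1")
            case True then show ?thesis using vlast by simp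
          next
            case False then show ?thesis using zv F2 by (simp add: Zvert_def)
          qed
        qed
      qed
    qed
    then show ?thesis using True by (intro exI[of _ 0]) simp
  next
    case False
    define M where "M = Max ((\<lambda>q. \<bar>T q\<bar>) ` {..m})"
    have "M \<in> (\<lambda>q. \<bar>T q\<bar>) ` {..m}" unfolding M_def by (rule Max_in) auto
    then obtain p where pm: "p \<le> m" and pM: "\<bar>T p\<bar> = M" by auto
    have pmax: "\<And>q. q \<le> m \<Longrightarrow> \<bar>T q\<bar> \<le> \<bar>T p\<bar>" unfolding pM M_def by (rule Max_ge) auto
    have Tp: "T p \<noteq> 0"
    proof
      assume "T p = 0"
      then have "\<forall>q\<in>{..m}. \<bar>T q\<bar> = 0" using pmax by fastforce
      then have "(\<Sum>q\<le>m. \<bar>T q\<bar>) = 0" by simp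
      then show False using False Ph_T by simp
    qed
    define s :: int where "s = (if T p > 0 then 1 else -1)"
    have s: "s = 1 \<or> s = -1" by (simp add: s_def)
    have c1: "v p - s \<in> {-1,0,1}" if p1: "1 \<le> p"
    proof -
      obtain q where q: "p = Suc q" using p1 by (cases p) auto
      have "v p \<in> {-1,0,1}" using zv p1 pm by (simp add: Zvert_def)
      moreover have "v p = T p - T q" using vS q by simp
      moreover have "\<bar>T q\<bar> \<le> \<bar>T p\<bar>" using pmax q pm by simp
      ultimately show ?thesis using Tp unfolding s_def by auto
    qed
    have c2: "v (Suc p) + s \<in> {-1,0,1}" if "Suc p \<le> m"
    proof -
      have "v (Suc p) \<in> {-1,0,1}" using zv that by (simp add: Zvert_def)
      moreover have "v (Suc p) = T (Suc p) - T p" using vS by simp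
      moreover have "\<bar>T (Suc p)\<bar> \<le> \<bar>T p\<bar>" using pmax that by simp
      ultimately show ?thesis using Tp unfolding s_def by auto
    qed
    obtain w j where adj: "Zadj n m v w"
      and wS: "\<forall>q\<le>m. Sp w q = Sp v q + (if q = p then -s else 0) + j * int n"
      using move[OF zv n1 m1 pm s c1 c2] by blast
    have "Ph n m w (k + j) = (\<Sum>q\<le>m. \<bar>Sp v q - k * int n + (if q = p then -s else 0)\<bar>)"
      by (rule Ph_shift[OF wS])
    also have "\<dots> = (\<Sum>q\<le>m. \<bar>T q\<bar> + (if q = p then \<bar>T p - s\<bar> - \<bar>T p\<bar> else 0))"
      by (rule sum.cong) (auto simp: T_def)
    also have "\<dots> = Ph n m v k + (\<bar>T p - s\<bar> - \<bar>T p\<bar>)"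
      using pm by (simp add: sum.distrib Ph_T)
    also have "\<dots> = Ph n m v k - 1" using Tp unfolding s_def by auto
    finally have phw: "Ph n m w (k + j) = Ph n m v k - 1" .
    have zw: "Zvert n m w" using adj by (simp add: Zadj_def)
    have "nat (Ph n m w (k + j)) < nat (Ph n m v k)"
    proof -
      have "0 \<le> (\<Sum>q\<le>m. \<bar>T q\<bar>)" by (rule sum_nonneg) simp
      then have "Ph n m v k > 0" using False Ph_T by linarith
      then show ?thesis using phw by simp
    qed
    then obtain j' where j': "int j' \<le> Ph n m w (k + j)" and rp: "(Zadj n m ^^ j') w (\<lambda>_. 0)"
      using less.hyps zw by blast
    have "(Zadj n m ^^ Suc j') v (\<lambda>_. 0)" using adj rp by (rule relpowp_Suc_I2)
    moreover have "int (Suc j') \<le> Ph n m v k" using j' phw by simp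
    ultimately show ?thesis by blast
  qed
qed


lemma lip_aux:
  assumes zv: "Zvert n m v"
  shows "a \<le> b \<Longrightarrow> b \<le> m \<Longrightarrow> \<bar>Sp v b - Sp v a\<bar> \<le> int b - int a"
proof (induction b)
  case 0 then show ?case by simp
next
  case (Suc b)
  show ?case
  proof (cases "a = Suc b")
    case True then show ?thesis by simp
  next
    case False
    then have ab: "a \<le> b" using Suc.prems by simp
    have "v (Suc b) \<in> {-1,0,1}" using zv Suc.prems by (simp add: Zvert_def)
    then have "\<bar>v (Suc b)\<bar> \<le> 1" by auto
    moreover have "\<bar>Sp v b - Sp v a\<bar> \<le> int b - int a" using Suc.IH ab Suc.prems by simp
    ultimately show ?thesis by (simp add: Sp_Suc)
  qed
qed

lemma lip:
  assumes zv: "Zvert n m v" and "q \<le> m" "P \<le> m"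
  shows "\<bar>Sp v q - Sp v P\<bar> \<le> \<bar>int q - int P\<bar>"
proof (cases "P \<le> q")
  case True then show ?thesis using lip_aux[OF zv True assms(2)] by simp
next
  case False then show ?thesis using lip_aux[OF zv _ assms(3), of q] by (simp add: abs_minus_commute)
qed

definition Fs :: "nat \<Rightarrow> int \<Rightarrow> int" where
  "Fs m x = (\<Sum>q\<le>m. \<bar>int q - x\<bar>)"

lemma Fs_refl: "2 * Fs m x = (\<Sum>q\<le>m. max \<bar>2 * int q - int m\<bar> \<bar>2 * x - int m\<bar>)"
proof -
  have r: "Fs m x = (\<Sum>q\<le>m. \<bar>int (m - q) - x\<bar>)"
    unfolding Fs_def
    by (rule sum.reindex_bij_witness[of _ "\<lambda>q. m - q" "\<lambda>q. m - q"]) auto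
  have "2 * Fs m x = (\<Sum>q\<le>m. \<bar>int q - x\<bar> + \<bar>int (m - q) - x\<bar>)"
    using r by (simp add: sum.distrib Fs_def)
  also have "\<dots> = (\<Sum>q\<le>m. max \<bar>2 * int q - int m\<bar> \<bar>2 * x - int m\<bar>)"
    by (rule sum.cong) (auto simp: of_nat_diff)
  finally show ?thesis .
qed

lemma Fs_mono:
  assumes "\<bar>2 * x - int m\<bar> \<le> \<bar>2 * y - int m\<bar>"
  shows "Fs m x \<le> Fs m y"
proof -
  have "2 * Fs m x \<le> 2 * Fs m y"
    unfolding Fs_refl by (rule sum_mono) (use assms in auto)
  then show ?thesis by simp
qed

lemma Sp_u0:
  "q \<le> m \<Longrightarrow> Sp (u0vert n m) q = (- \<lfloor>(real m - real n) / 2\<rfloor>) mod int n + int q"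
proof (induction q)
  case 0 then show ?case by (simp add: Sp_0 u0vert_def Let_def)
next
  case (Suc q) then show ?case by (simp add: Sp_Suc u0vert_def Let_def)
qed

lemma Piv_sum:
  assumes "0 \<le> p"
  shows "(\<Sum>i\<in>{0..p}. v (nat i)) = Sp v (nat p)"
proof -
  have "{0..p} = int ` {0..nat p}" using assms by (simp add: image_int_atLeastAtMost)
  then have "(\<Sum>i\<in>{0..p}. v (nat i)) = (\<Sum>i\<in>{0..nat p}. v (nat (int i)))"
    by (simp add: sum.reindex)
  then show ?thesis by (simp add: Sp_def atLeast0AtMost)
qed


lemma key_arith:
  fixes n m :: nat and p r c :: int
  assumes n1: "1 < n" and nm: "n \<le> m"
    and cdef: "2 * c = int m - int n - (int m - int n) mod 2"
    and hp: "real_of_int \<bar>2 * p - int m\<bar> < 2 * hnm n m"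
  shows "\<bar>2 * p - int m\<bar> \<le> \<bar>2 * (c + r * int n) - int m\<bar>"
proof (cases "even (int m - int n)")
  case True
  then have hh: "2 * hnm n m = real n" by (simp add: hnm_def)
  have pl: "\<bar>2 * p - int m\<bar> < int n" using hp hh by linarith
  have "(int m - int n) mod 2 = 0" using True by presburger
  then have e: "2 * (c + r * int n) - int m = int n * (2 * r - 1)" using cdef by (simp add: algebra_simps)
  have "\<bar>2 * r - 1\<bar> \<ge> 1" by presburger
  then have "int n * 1 \<le> int n * \<bar>2 * r - 1\<bar>" by (intro mult_left_mono) auto
  then have "int n \<le> \<bar>2 * (c + r * int n) - int m\<bar>" unfolding e by (simp add: abs_mult)
  then show ?thesis using pl by simp
next
  case False
  then have hh: "2 * hnm n m = real n + 1" by (simp add: hnm_def)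
  have pl: "\<bar>2 * p - int m\<bar> < int n + 1" using hp hh by linarith
  have "\<bar>2 * p - int m\<bar> \<noteq> int n" using False by presburger
  then have pl2: "\<bar>2 * p - int m\<bar> \<le> int n - 1" using pl by linarith
  have "(int m - int n) mod 2 = 1" using False by presburger
  then have e: "2 * (c + r * int n) - int m = int n * (2 * r - 1) - 1" using cdef by (simp add: algebra_simps)
  show ?thesis
  proof (cases "r \<ge> 1")
    case True
    then have "int n * 1 \<le> int n * (2 * r - 1)" by (intro mult_left_mono) auto
    then show ?thesis using pl2 e by linarith
  next
    case False
    then have "int n * (2 * r - 1) \<le> int n * (-1)" by (intro mult_left_mono) auto
    then show ?thesis using pl2 e by linarith
  qed
qed

theorem lemma5p24:
  fixes n m :: nat and v :: "nat \<Rightarrow> int"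
  assumes "1 < n" and "n \<le> m"
    and "Zvert n m v"
    and "hval n m v < hnm n m"
  shows "Zdist n m v (\<lambda>_. 0) \<le> Zdist n m (u0vert n m) (\<lambda>_. 0)
       \<and> Zdist n m (u0vert n m) (\<lambda>_. 0) \<le> Dnm n m"
proof
  have n1: "n > 1" and nm: "n \<le> m" and zv: "Zvert n m v" using assms by auto
  have m1: "m \<ge> 1" using n1 nm by simp
  have finP: "finite (Piv n m v)"
    by (rule finite_subset[of _ "{-1..int m + 1}"]) (auto simp: Piv_def)
  have neP: "-1 \<in> Piv n m v" by (simp add: Piv_def)
  have "hval n m v \<in> (\<lambda>p. \<bar>real_of_int p - real m / 2\<bar>) ` Piv n m v"
    unfolding hval_def using finP neP by (intro Min_in) auto
  then obtain p where pP: "p \<in> Piv n m v" and hpv: "hval n m v = \<bar>real_of_int p - real m / 2\<bar>" by auto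
  have "real_of_int \<bar>2 * p - int m\<bar> = 2 * \<bar>real_of_int p - real m / 2\<bar>" by (simp add: abs_if)
  then have hp: "real_of_int \<bar>2 * p - int m\<bar> < 2 * hnm n m" using hpv assms(4) by linarith
  have "2 * hnm n m \<le> real n + 1" by (simp add: hnm_def)
  then have "real_of_int \<bar>2 * p - int m\<bar> < real n + 1" using hp by linarith
  then have "real_of_int \<bar>2 * p - int m\<bar> < real_of_int (int n + 1)" by simp
  then have "\<bar>2 * p - int m\<bar> < int n + 1" by (simp only: of_int_less_iff)
  then have p0: "0 \<le> p" and pm: "p \<le> int m" using nm by linarith+
  define P where "P = nat p"
  have PM: "P \<le> m" using pm p0 by (simp add: P_def)
  have "int n dvd Sp v P" using pP p0 Piv_sum[OF p0, of v] by (simp add: Piv_def P_def)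
  then obtain c where cP: "Sp v P = c * int n" by (metis dvd_def mult.commute)
  have "Ph n m v c \<le> Fs m (int P)"
    unfolding Ph_def Fs_def
  proof (rule sum_mono)
    fix q assume "q \<in> {..m}"
    then show "\<bar>Sp v q - c * int n\<bar> \<le> \<bar>int q - int P\<bar>" using lip[OF zv _ PM, of q] cP by simp
  qed
  moreover obtain j where j: "int j \<le> Ph n m v c" and rj: "(Zadj n m ^^ j) v (\<lambda>_. 0)"
    using upper[OF zv n1 m1] by blast
  ultimately have jF: "int j \<le> Fs m (int P)" by simp
  define cc where "cc = \<lfloor>(real m - real n) / 2\<rfloor>"
  have ccd: "cc = (int m - int n) div 2"
  proof -
    have "(real m - real n) / 2 = real_of_int (int m - int n) / real_of_int 2" by simp
    then show ?thesis unfolding cc_def by (metis floor_divide_of_int_eq)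
  qed
  have cdef: "2 * cc = int m - int n - (int m - int n) mod 2" unfolding ccd by presburger
  have low: "Fs m (int P) \<le> int j'" if rj': "(Zadj n m ^^ j') (u0vert n m) (\<lambda>_. 0)" for j'
  proof -
    obtain k where k: "Ph n m (u0vert n m) k \<le> int j'" using lower[OF rj' m1] by blast
    obtain t where t: "(- cc) mod int n = - cc + t * int n" using mod_int_ex by blast
    have "Ph n m (u0vert n m) k = Fs m (cc + (k - t) * int n)"
      unfolding Ph_def Fs_def
      by (rule sum.cong) (auto simp: Sp_u0 cc_def[symmetric] t algebra_simps)
    moreover have "Fs m (int P) \<le> Fs m (cc + (k - t) * int n)"
      by (rule Fs_mono) (use key_arith[OF n1 nm cdef, of p "k - t"] hp p0 P_def in simp)
    ultimately show ?thesis using k by simp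
  qed
  have d1: "Zdist n m v (\<lambda>_. 0) \<le> enat j"
    unfolding Zdist_def using rj by (intro INF_lower) simp
  have d2: "enat (nat (Fs m (int P))) \<le> Zdist n m (u0vert n m) (\<lambda>_. 0)"
    unfolding Zdist_def
  proof (rule INF_greatest)
    fix j' assume "j' \<in> {k. (Zadj n m ^^ k) (u0vert n m) (\<lambda>_. 0)}"
    then have "Fs m (int P) \<le> int j'" using low by simp
    then show "enat (nat (Fs m (int P))) \<le> enat j'" by simp
  qed
  have "enat j \<le> enat (nat (Fs m (int P)))" using jF by simp
  then show "Zdist n m v (\<lambda>_. 0) \<le> Zdist n m (u0vert n m) (\<lambda>_. 0)" using d1 d2 by (meson order_trans)
next
  show "Zdist n m (u0vert n m) (\<lambda>_. 0) \<le> Dnm n m" by (simp add: Dnm_def)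
qed

end
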